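(* Let $\alpha\in(0,2]$. For integers $n_1,n_2\ge 1$, with $n=n_1+n_2$, define $$f_{\{n_1\}\{n_2\}}=\max_{|\phi_a\rangle,|\phi_b\rangle}\ \operatorname{Tr}\Big[\big(\alpha\mathcal{M}^{(n)}_Z+\mathcal{M}^{(n)}_X\big)\,|\phi_a\rangle\langle\phi_a|\otimes|\phi_b\rangle\langle\phi_b|\Big],$$ where the maximum is over unit vectors $|\phi_a\rangle\in(\mathbb{C}^2)^{\otimes n_1}$ and $|\phi_b\rangle\in(\mathbb{C}^2)^{\otimes n_2}$, and $\mathcal{M}^{(n)}_Z=(|0\rangle\langle 0|)^{\otimes n}+(|1\rangle\langle 1|)^{\otimes n}$, $\mathcal{M}^{(n)}_X=\sigma_x^{\otimes n}$ with $\sigma_x=|0\rangle\langle 1|+|1\rangle\langle 0|$. Then for all $n_1,n_2\ge 1$, $$f_{\{n_1\}\{n_2\}}=f_{\{n_1\}\{1\}}.$$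
   Context: $\{|0\rangle,|1\rangle\}$ is the computational basis of $\mathbb{C}^2$; $f_{\{n_1\}\{1\}}$ is the same quantity defined with $n_2=1$ (so on $n_1+1$ qubits). *)

theory Defs
  imports Complex_Main
begin

text \<open>n-qubit space (C^2)^{\<otimes>n}: computational basis indexed by bit strings
 (bool lists of length n; False = |0>, True = |1>).\<close>

definition bitstrings :: "nat \<Rightarrow> bool list set" where
  "bitstrings n = {xs. length xs = n}"

type_synonym qvec = "bool list \<Rightarrow> complex"
type_synonym qop = "bool list \<Rightarrow> bool list \<Rightarrow> complex"

definition unit_vec :: "nat \<Rightarrow> qvec \<Rightarrow> bool" where
  "unit_vec n \<phi> \<longleftrightarrow> (\<Sum>xs\<in>bitstrings n. (cmod (\<phi> xs))\<^sup>2) = 1"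

definition proj :: "qvec \<Rightarrow> qop" where
  "proj \<phi> = (\<lambda>xs ys. \<phi> xs * cnj (\<phi> ys))"

definition op_tensor :: "nat \<Rightarrow> qop \<Rightarrow> qop \<Rightarrow> qop" where
  "op_tensor n1 A B = (\<lambda>xs ys. A (take n1 xs) (take n1 ys) * B (drop n1 xs) (drop n1 ys))"

definition tensor_pow :: "(bool \<Rightarrow> bool \<Rightarrow> complex) \<Rightarrow> nat \<Rightarrow> qop" where
  "tensor_pow A n = (\<lambda>xs ys. \<Prod>i<n. A (xs ! i) (ys ! i))"

definition op_mult :: "nat \<Rightarrow> qop \<Rightarrow> qop \<Rightarrow> qop" where
  "op_mult n A B = (\<lambda>xs zs. \<Sum>ys\<in>bitstrings n. A xs ys * B ys zs)"

definition op_trace :: "nat \<Rightarrow> qop \<Rightarrow> complex" where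
  "op_trace n A = (\<Sum>xs\<in>bitstrings n. A xs xs)"

definition op_add :: "qop \<Rightarrow> qop \<Rightarrow> qop" where
  "op_add A B = (\<lambda>xs ys. A xs ys + B xs ys)"

definition op_scale :: "complex \<Rightarrow> qop \<Rightarrow> qop" where
  "op_scale c A = (\<lambda>xs ys. c * A xs ys)"

definition ket0bra0 :: "bool \<Rightarrow> bool \<Rightarrow> complex" where
  "ket0bra0 a b = (if \<not> a \<and> \<not> b then 1 else 0)"
definition ket1bra1 :: "bool \<Rightarrow> bool \<Rightarrow> complex" where
  "ket1bra1 a b = (if a \<and> b then 1 else 0)"
definition sigma_x :: "bool \<Rightarrow> bool \<Rightarrow> complex" where
  "sigma_x a b = (if a \<noteq> b then 1 else 0)"

definition MZ :: "nat \<Rightarrow> qop" where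
  "MZ n = op_add (tensor_pow ket0bra0 n) (tensor_pow ket1bra1 n)"

definition MX :: "nat \<Rightarrow> qop" where
  "MX n = tensor_pow sigma_x n"

text \<open>f_{n1}{n2}: the maximum (taken as supremum; the value is real since the operator is
 Hermitian) over unit product states.\<close>
definition f_val :: "real \<Rightarrow> nat \<Rightarrow> nat \<Rightarrow> real" where
  "f_val \<alpha> n1 n2 = Sup {Re (op_trace (n1 + n2)
       (op_mult (n1 + n2) (op_add (op_scale (complex_of_real \<alpha>) (MZ (n1 + n2))) (MX (n1 + n2)))
          (op_tensor n1 (proj \<phi>a) (proj \<phi>b)))) |
      \<phi>a \<phi>b. unit_vec n1 \<phi>a \<and> unit_vec n2 \<phi>b}"

end

theory Submission
  imports Defs
begin

lemma fin_bs[simp]: "finite (bitstrings n)"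
proof -
  have "bitstrings n = {xs. set xs \<subseteq> (UNIV::bool set) \<and> length xs = n}"
    by (auto simp: bitstrings_def)
  thus ?thesis using finite_lists_length_eq[of "UNIV::bool set" n] by simp
qed

lemma mem_bs[simp]: "xs \<in> bitstrings n \<longleftrightarrow> length xs = n"
  by (simp add: bitstrings_def)

lemma bs_add: "bitstrings (n1+n2) = (\<lambda>(u,v). u@v) ` (bitstrings n1 \<times> bitstrings n2)"
proof
  show "bitstrings (n1+n2) \<subseteq> (\<lambda>(u,v). u@v) ` (bitstrings n1 \<times> bitstrings n2)"
  proof
    fix xs assume "xs \<in> bitstrings (n1+n2)"
    hence "xs = (\<lambda>(u,v). u@v) (take n1 xs, drop n1 xs)" "(take n1 xs, drop n1 xs) \<in> bitstrings n1 \<times> bitstrings n2"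
      by auto
    thus "xs \<in> (\<lambda>(u,v). u@v) ` (bitstrings n1 \<times> bitstrings n2)" by blast
  qed
qed auto

lemma bs_inj: "inj_on (\<lambda>(u,v). u@v) (bitstrings n1 \<times> bitstrings n2)"
  by (auto simp: inj_on_def)

lemma split_sum:
  "(\<Sum>xs\<in>bitstrings (n1+n2). g (take n1 xs) * h (drop n1 xs)) =
   (\<Sum>u\<in>bitstrings n1. g u) * (\<Sum>v\<in>bitstrings n2. (h v :: complex))"
proof -
  have "(\<Sum>xs\<in>bitstrings (n1+n2). g (take n1 xs) * h (drop n1 xs)) =
        (\<Sum>p\<in>bitstrings n1 \<times> bitstrings n2. g (take n1 ((\<lambda>(u,v). u@v) p)) * h (drop n1 ((\<lambda>(u,v). u@v) p)))"
    unfolding bs_add by (rule sum.reindex[OF bs_inj, unfolded comp_def])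
  also have "\<dots> = (\<Sum>p\<in>bitstrings n1 \<times> bitstrings n2. g (fst p) * h (snd p))"
    by (rule sum.cong) auto
  also have "\<dots> = (\<Sum>u\<in>bitstrings n1. g u) * (\<Sum>v\<in>bitstrings n2. h v)"
    by (simp add: sum_product sum.cartesian_product case_prod_beta)
  finally show ?thesis .
qed

lemma tp_ind:
  assumes "length xs = n" "length ys = n"
  shows "tensor_pow (\<lambda>a b. if P a b then 1 else 0) n xs ys = (if (\<forall>i<n. P (xs!i) (ys!i)) then 1 else 0)"
proof (cases "\<forall>i<n. P (xs!i) (ys!i)")
  case True thus ?thesis by (simp add: tensor_pow_def)
next
  case False
  then obtain i where "i<n" "\<not> P (xs!i) (ys!i)" by auto
  thus ?thesis using False by (auto simp: tensor_pow_def intro!: prod_zero)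
qed

lemma rep_iff: "length xs = n \<Longrightarrow> (\<forall>i<n. xs!i = b) \<longleftrightarrow> xs = replicate n b"
  by (auto simp: list_eq_iff_nth_eq)

lemma notmap_iff: "length xs = n \<Longrightarrow> length ys = n \<Longrightarrow> (\<forall>i<n. xs!i \<noteq> ys!i) \<longleftrightarrow> ys = map Not xs"
  by (auto simp: list_eq_iff_nth_eq)

lemma tp0: "length xs = n \<Longrightarrow> length ys = n \<Longrightarrow>
  tensor_pow ket0bra0 n xs ys = (if xs = replicate n False \<and> ys = replicate n False then 1 else 0)"
proof -
  assume a: "length xs = n" "length ys = n"
  have "ket0bra0 = (\<lambda>a b. if \<not> a \<and> \<not> b then 1 else 0)" by (auto simp: ket0bra0_def fun_eq_iff)
  hence "tensor_pow ket0bra0 n xs ys = (if (\<forall>i<n. \<not> xs!i \<and> \<not> ys!i) then 1 else 0)"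
    using tp_ind[OF a, of "\<lambda>a b. \<not> a \<and> \<not> b"] by simp
  also have "(\<forall>i<n. \<not> xs!i \<and> \<not> ys!i) \<longleftrightarrow> (\<forall>i<n. xs!i = False) \<and> (\<forall>i<n. ys!i = False)" by auto
  finally show ?thesis using a by (simp add: list_eq_iff_nth_eq)
qed

lemma tp1: "length xs = n \<Longrightarrow> length ys = n \<Longrightarrow>
  tensor_pow ket1bra1 n xs ys = (if xs = replicate n True \<and> ys = replicate n True then 1 else 0)"
proof -
  assume a: "length xs = n" "length ys = n"
  have "ket1bra1 = (\<lambda>a b. if a \<and> b then 1 else 0)" by (auto simp: ket1bra1_def fun_eq_iff)
  hence "tensor_pow ket1bra1 n xs ys = (if (\<forall>i<n. xs!i \<and> ys!i) then 1 else 0)"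
    using tp_ind[OF a, of "\<lambda>a b. a \<and> b"] by simp
  also have "(\<forall>i<n. xs!i \<and> ys!i) \<longleftrightarrow> (\<forall>i<n. xs!i = True) \<and> (\<forall>i<n. ys!i = True)" by auto
  finally show ?thesis using a by (simp add: list_eq_iff_nth_eq)
qed

lemma tpx: "length xs = n \<Longrightarrow> length ys = n \<Longrightarrow>
  tensor_pow sigma_x n xs ys = (if ys = map Not xs then 1 else 0)"
proof -
  assume a: "length xs = n" "length ys = n"
  have "sigma_x = (\<lambda>a b. if a \<noteq> b then 1 else 0)" by (auto simp: sigma_x_def fun_eq_iff)
  hence "tensor_pow sigma_x n xs ys = (if (\<forall>i<n. xs!i \<noteq> ys!i) then 1 else 0)"
    using tp_ind[OF a, of "\<lambda>a b. a \<noteq> b"] by simp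
  thus ?thesis using notmap_iff[OF a] by simp
qed

lemma ev_point:
  assumes "\<And>xs ys. length xs = n \<Longrightarrow> length ys = n \<Longrightarrow> A xs ys = (if xs = z \<and> ys = z then 1 else 0)"
    and "length z = n"
  shows "op_trace n (op_mult n A \<rho>) = \<rho> z z"
proof -
  have "op_trace n (op_mult n A \<rho>) = (\<Sum>xs\<in>bitstrings n. if xs = z then \<rho> z z else 0)"
    unfolding op_trace_def op_mult_def
  proof (rule sum.cong[OF refl])
    fix xs assume xs: "xs \<in> bitstrings n"
    have "(\<Sum>ys\<in>bitstrings n. A xs ys * \<rho> ys xs) = (\<Sum>ys\<in>bitstrings n. if ys = z then (if xs = z then \<rho> z z else 0) else 0)"
      by (rule sum.cong[OF refl]) (use xs assms(1) in auto)
    also have "\<dots> = (if xs = z then \<rho> z z else 0)" using assms(2) by simp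
    finally show "(\<Sum>ys\<in>bitstrings n. A xs ys * \<rho> ys xs) = (if xs = z then \<rho> z z else 0)" .
  qed
  also have "\<dots> = \<rho> z z" using assms(2) by simp
  finally show ?thesis .
qed

lemma ev_x: "op_trace n (op_mult n (MX n) \<rho>) = (\<Sum>xs\<in>bitstrings n. \<rho> (map Not xs) xs)"
  unfolding op_trace_def op_mult_def MX_def
proof (rule sum.cong[OF refl])
  fix xs assume xs: "xs \<in> bitstrings n"
  have "(\<Sum>ys\<in>bitstrings n. tensor_pow sigma_x n xs ys * \<rho> ys xs) = (\<Sum>ys\<in>bitstrings n. if ys = map Not xs then \<rho> (map Not xs) xs else 0)"
    by (rule sum.cong[OF refl]) (use xs tpx in auto)
  also have "\<dots> = \<rho> (map Not xs) xs" using xs by simp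
  finally show "(\<Sum>ys\<in>bitstrings n. tensor_pow sigma_x n xs ys * \<rho> ys xs) = \<rho> (map Not xs) xs" .
qed

lemma trace_lin: "op_trace n (op_mult n (op_add (op_scale c (MZ n)) (MX n)) \<rho>) =
   c * (op_trace n (op_mult n (tensor_pow ket0bra0 n) \<rho>) + op_trace n (op_mult n (tensor_pow ket1bra1 n) \<rho>))
   + op_trace n (op_mult n (MX n) \<rho>)"
  unfolding op_trace_def op_mult_def op_add_def op_scale_def MZ_def
  by (simp add: algebra_simps sum.distrib sum_distrib_left)


definition Xc :: "nat \<Rightarrow> qvec \<Rightarrow> complex" where
  "Xc n \<phi> = (\<Sum>xs\<in>bitstrings n. \<phi> (map Not xs) * cnj (\<phi> xs))"

definition pz :: "nat \<Rightarrow> bool \<Rightarrow> qvec \<Rightarrow> real" where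
  "pz n b \<phi> = (cmod (\<phi> (replicate n b)))\<^sup>2"

definition Vv :: "real \<Rightarrow> nat \<Rightarrow> nat \<Rightarrow> qvec \<Rightarrow> qvec \<Rightarrow> real" where
  "Vv \<alpha> n1 n2 a b = \<alpha> * (pz n1 False a * pz n2 False b + pz n1 True a * pz n2 True b)
      + Re (Xc n1 a) * Re (Xc n2 b)"

lemma notmap_sum: "(\<Sum>xs\<in>bitstrings n. f (map Not xs)) = (\<Sum>xs\<in>bitstrings n. f xs)"
  by (rule sum.reindex_bij_witness[of _ "map Not" "map Not"]) (auto simp: comp_def)

lemma Im_Xc: "Im (Xc n \<phi>) = 0"
proof -
  have "cnj (Xc n \<phi>) = (\<Sum>xs\<in>bitstrings n. cnj (\<phi> (map Not xs)) * \<phi> xs)"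
    by (simp add: Xc_def)
  also have "\<dots> = (\<Sum>xs\<in>bitstrings n. cnj (\<phi> (map Not (map Not xs))) * \<phi> (map Not xs))"
    by (rule notmap_sum[symmetric])
  also have "\<dots> = Xc n \<phi>" by (simp add: Xc_def comp_def mult.commute)
  finally have "cnj (Xc n \<phi>) = Xc n \<phi>" .
  thus ?thesis by (metis Reals_cnj_iff complex_is_Real_iff)
qed

lemma proj_diag: "proj \<phi> u u = complex_of_real ((cmod (\<phi> u))\<^sup>2)"
  by (simp add: proj_def complex_norm_square[symmetric])

lemma value_eq:
  "Re (op_trace (n1 + n2)
       (op_mult (n1 + n2) (op_add (op_scale (complex_of_real \<alpha>) (MZ (n1 + n2))) (MX (n1 + n2)))
          (op_tensor n1 (proj a) (proj b)))) = Vv \<alpha> n1 n2 a b"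
proof -
  let ?n = "n1+n2"
  let ?r = "op_tensor n1 (proj a) (proj b)"
  have e0: "op_trace ?n (op_mult ?n (tensor_pow ket0bra0 ?n) ?r) = ?r (replicate ?n False) (replicate ?n False)"
    by (rule ev_point) (auto simp: tp0)
  have e1: "op_trace ?n (op_mult ?n (tensor_pow ket1bra1 ?n) ?r) = ?r (replicate ?n True) (replicate ?n True)"
    by (rule ev_point) (auto simp: tp1)
  have r0: "?r (replicate ?n False) (replicate ?n False) = complex_of_real (pz n1 False a * pz n2 False b)"
    by (simp add: op_tensor_def proj_diag pz_def)
  have r1: "?r (replicate ?n True) (replicate ?n True) = complex_of_real (pz n1 True a * pz n2 True b)"
    by (simp add: op_tensor_def proj_diag pz_def)
  have ex: "op_trace ?n (op_mult ?n (MX ?n) ?r) = Xc n1 a * Xc n2 b"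
  proof -
    have "op_trace ?n (op_mult ?n (MX ?n) ?r) = (\<Sum>xs\<in>bitstrings ?n. ?r (map Not xs) xs)" by (rule ev_x)
    also have "\<dots> = (\<Sum>xs\<in>bitstrings ?n. (\<lambda>u. a (map Not u) * cnj (a u)) (take n1 xs) * (\<lambda>v. b (map Not v) * cnj (b v)) (drop n1 xs))"
      by (rule sum.cong[OF refl]) (simp add: op_tensor_def proj_def take_map drop_map)
    also have "\<dots> = Xc n1 a * Xc n2 b" unfolding Xc_def by (rule split_sum)
    finally show ?thesis .
  qed
  have "Re (op_trace ?n (op_mult ?n (op_add (op_scale (complex_of_real \<alpha>) (MZ ?n)) (MX ?n)) ?r))
     = Re (complex_of_real \<alpha> * (complex_of_real (pz n1 False a * pz n2 False b) + complex_of_real (pz n1 True a * pz n2 True b)) + Xc n1 a * Xc n2 b)"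
    unfolding trace_lin e0 e1 r0 r1 ex ..
  also have "\<dots> = Vv \<alpha> n1 n2 a b" by (simp add: Vv_def Im_Xc)
  finally show ?thesis .
qed


lemma split3:
  assumes "z0 \<in> bitstrings n" "z1 \<in> bitstrings n" "z0 \<noteq> z1"
  shows "(\<Sum>xs\<in>bitstrings n. f xs) = f z0 + f z1 + (\<Sum>xs\<in>bitstrings n - {z0,z1}. f xs)"
proof -
  have "(\<Sum>xs\<in>bitstrings n. f xs) = f z0 + (\<Sum>xs\<in>bitstrings n - {z0}. f xs)"
    using assms by (simp add: sum.remove)
  also have "(\<Sum>xs\<in>bitstrings n - {z0}. f xs) = f z1 + (\<Sum>xs\<in>bitstrings n - {z0} - {z1}. f xs)"
    using assms by (simp add: sum.remove)
  also have "bitstrings n - {z0} - {z1} = bitstrings n - {z0,z1}" by auto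
  finally show ?thesis by (simp add: add.assoc)
qed

lemma bs1: "bitstrings (Suc 0) = {[False],[True]}"
proof -
  have "length xs = Suc 0 \<longleftrightarrow> xs = [False] \<or> xs = [True]" for xs :: "bool list"
    by (cases xs) auto
  thus ?thesis by (auto simp: bitstrings_def)
qed

lemma rep_ne: "1 \<le> n \<Longrightarrow> replicate n False \<noteq> replicate n True"
  by (cases n) auto

lemma embed:
  assumes n2: "1 \<le> n2" and u: "unit_vec 1 b"
  shows "\<exists>b'. unit_vec n2 b' \<and> Vv \<alpha> n1 n2 a b' = Vv \<alpha> n1 1 a b"
proof -
  let ?z0 = "replicate n2 False" and ?z1 = "replicate n2 True"
  define b' where "b' xs = (if xs = ?z0 then b [False] else if xs = ?z1 then b [True] else 0)" for xs
  have ne: "?z0 \<noteq> ?z1" using rep_ne[OF n2] .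
  have R: "b' xs = 0" if "xs \<in> bitstrings n2 - {?z0, ?z1}" for xs using that by (auto simp: b'_def)
  have "(\<Sum>xs\<in>bitstrings n2. (cmod (b' xs))\<^sup>2) = (cmod (b [False]))\<^sup>2 + (cmod (b [True]))\<^sup>2"
    using ne by (subst split3[of ?z0 n2 ?z1]) (auto simp: R b'_def)
  also have "\<dots> = 1" using u by (simp add: unit_vec_def bs1)
  finally have un: "unit_vec n2 b'" by (simp add: unit_vec_def)
  have "Xc n2 b' = b [True] * cnj (b [False]) + b [False] * cnj (b [True])"
    unfolding Xc_def using ne by (subst split3[of ?z0 n2 ?z1]) (auto simp: R b'_def)
  also have "\<dots> = Xc 1 b" by (simp add: Xc_def bs1)
  finally have "Xc n2 b' = Xc 1 b" .
  moreover have "pz n2 c b' = pz 1 c b" for c using ne by (cases c) (auto simp: pz_def b'_def)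
  ultimately show ?thesis using un by (auto simp: Vv_def)
qed


lemma xbound:
  assumes n: "1 \<le> n" and u: "unit_vec n b"
  defines "r0 \<equiv> cmod (b (replicate n False))" and "r1 \<equiv> cmod (b (replicate n True))"
  shows "\<bar>Re (Xc n b)\<bar> \<le> 2 * r0 * r1 + (1 - r0\<^sup>2 - r1\<^sup>2)" and "0 \<le> 1 - r0\<^sup>2 - r1\<^sup>2"
proof -
  let ?z0 = "replicate n False" and ?z1 = "replicate n True"
  let ?R = "bitstrings n - {?z0, ?z1}"
  define r where "r xs = cmod (b xs)" for xs
  have ne: "?z0 \<noteq> ?z1" using rep_ne[OF n] .
  have sp: "\<And>f. (\<Sum>xs\<in>bitstrings n. f xs) = f ?z0 + f ?z1 + (\<Sum>xs\<in>?R. f xs)"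
    using ne by (intro split3) auto
  have U: "(\<Sum>xs\<in>bitstrings n. (r xs)\<^sup>2) = 1" using u by (simp add: unit_vec_def r_def)
  have U': "(\<Sum>xs\<in>bitstrings n. (r (map Not xs))\<^sup>2) = 1" using U notmap_sum[of "\<lambda>xs. (r xs)\<^sup>2"] by simp
  have q1: "(\<Sum>xs\<in>?R. (r xs)\<^sup>2) = 1 - r0\<^sup>2 - r1\<^sup>2" using U sp[of "\<lambda>xs. (r xs)\<^sup>2"]
    by (simp add: r_def r0_def r1_def)
  have q2: "(\<Sum>xs\<in>?R. (r (map Not xs))\<^sup>2) = 1 - r0\<^sup>2 - r1\<^sup>2" using U' sp[of "\<lambda>xs. (r (map Not xs))\<^sup>2"]
    by (simp add: r_def r0_def r1_def)
  show "0 \<le> 1 - r0\<^sup>2 - r1\<^sup>2" using q1[symmetric] by (simp add: sum_nonneg)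
  have "\<bar>Re (Xc n b)\<bar> \<le> cmod (Xc n b)" by (rule abs_Re_le_cmod)
  also have "\<dots> \<le> (\<Sum>xs\<in>bitstrings n. cmod (b (map Not xs) * cnj (b xs)))"
    unfolding Xc_def by (rule norm_sum)
  also have "\<dots> = (\<Sum>xs\<in>bitstrings n. r (map Not xs) * r xs)" by (simp add: r_def norm_mult)
  also have "\<dots> = r1 * r0 + r0 * r1 + (\<Sum>xs\<in>?R. r (map Not xs) * r xs)"
    by (subst sp) (simp add: r_def r0_def r1_def)
  also have "(\<Sum>xs\<in>?R. r (map Not xs) * r xs) \<le> (\<Sum>xs\<in>?R. ((r (map Not xs))\<^sup>2 + (r xs)\<^sup>2) / 2)"
  proof (rule sum_mono)
    fix xs
    have "0 \<le> (r (map Not xs) - r xs)\<^sup>2" by simp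
    thus "r (map Not xs) * r xs \<le> ((r (map Not xs))\<^sup>2 + (r xs)\<^sup>2) / 2" by (simp add: power2_eq_square algebra_simps)
  qed
  also have "(\<Sum>xs\<in>?R. ((r (map Not xs))\<^sup>2 + (r xs)\<^sup>2) / 2) = 1 - r0\<^sup>2 - r1\<^sup>2"
    using q1 q2 by (simp add: sum_divide_distrib[symmetric] sum.distrib)
  finally show "\<bar>Re (Xc n b)\<bar> \<le> 2 * r0 * r1 + (1 - r0\<^sup>2 - r1\<^sup>2)" by simp
qed

lemma dominate:
  assumes n2: "1 \<le> n2" and u: "unit_vec n2 b" and al: "0 \<le> \<alpha>"
  shows "\<exists>\<psi>. unit_vec 1 \<psi> \<and> Vv \<alpha> n1 n2 a b \<le> Vv \<alpha> n1 1 a \<psi>"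
proof -
  define r0 where "r0 = cmod (b (replicate n2 False))"
  define r1 where "r1 = cmod (b (replicate n2 True))"
  define q where "q = 1 - r0\<^sup>2 - r1\<^sup>2"
  define c0 where "c0 = r0\<^sup>2 + q/2"
  define c1 where "c1 = r1\<^sup>2 + q/2"
  define s :: real where "s = (if 0 \<le> Re (Xc n1 a) then 1 else -1)"
  define \<psi> where "\<psi> xs = (if xs = [False] then complex_of_real (sqrt c0)
      else if xs = [True] then complex_of_real (s * sqrt c1) else 0)" for xs
  have xb: "\<bar>Re (Xc n2 b)\<bar> \<le> 2 * r0 * r1 + q" and q0: "0 \<le> q"
    using xbound[OF n2 u] by (simp_all add: r0_def r1_def q_def)
  have c0: "0 \<le> c0" and c1: "0 \<le> c1" using q0 by (simp_all add: c0_def c1_def)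
  have ss: "s * s = 1" "\<bar>s\<bar> = 1" by (simp_all add: s_def)
  have p0: "pz 1 False \<psi> = c0" using c0 by (simp add: pz_def \<psi>_def)
  have p1: "pz 1 True \<psi> = c1" using c1 ss by (simp add: pz_def \<psi>_def abs_mult norm_mult)
  have "unit_vec 1 \<psi> \<longleftrightarrow> pz 1 False \<psi> + pz 1 True \<psi> = 1" by (simp add: unit_vec_def bs1 pz_def)
  hence un: "unit_vec 1 \<psi>" using p0 p1 by (simp add: c0_def c1_def q_def)
  have X1: "Re (Xc 1 \<psi>) = 2 * s * (sqrt c0 * sqrt c1)" by (simp add: Xc_def bs1 \<psi>_def)
  have b0: "pz n2 False b = r0\<^sup>2" "pz n2 True b = r1\<^sup>2" by (simp_all add: pz_def r0_def r1_def)
  have r0p: "0 \<le> r0" "0 \<le> r1" by (simp_all add: r0_def r1_def)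
  have "(2 * r0 * r1 + q)\<^sup>2 \<le> 4 * c0 * c1"
  proof -
    have "4 * c0 * c1 - (2 * r0 * r1 + q)\<^sup>2 = 2 * q * (r0 - r1)\<^sup>2"
      by (simp add: c0_def c1_def power2_eq_square algebra_simps)
    moreover have "0 \<le> 2 * q * (r0 - r1)\<^sup>2" using q0 by simp
    ultimately show ?thesis by linarith
  qed
  hence "2 * r0 * r1 + q \<le> sqrt (4 * c0 * c1)" by (rule real_le_rsqrt)
  also have "sqrt (4 * c0 * c1) = 2 * (sqrt c0 * sqrt c1)" by (simp add: real_sqrt_mult)
  finally have xb2: "\<bar>Re (Xc n2 b)\<bar> \<le> 2 * (sqrt c0 * sqrt c1)" using xb by linarith
  have "Re (Xc n1 a) * Re (Xc n2 b) \<le> \<bar>Re (Xc n1 a)\<bar> * \<bar>Re (Xc n2 b)\<bar>"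
    by (metis abs_ge_self abs_mult)
  also have "\<dots> \<le> \<bar>Re (Xc n1 a)\<bar> * (2 * (sqrt c0 * sqrt c1))"
    using xb2 by (simp add: mult_left_mono)
  also have "\<dots> = Re (Xc n1 a) * Re (Xc 1 \<psi>)" unfolding X1 by (simp add: s_def)
  finally have XX: "Re (Xc n1 a) * Re (Xc n2 b) \<le> Re (Xc n1 a) * Re (Xc 1 \<psi>)" .
  have "pz n1 False a * r0\<^sup>2 + pz n1 True a * r1\<^sup>2 \<le> pz n1 False a * c0 + pz n1 True a * c1"
    using q0 by (intro add_mono mult_left_mono) (auto simp: c0_def c1_def pz_def)
  hence "\<alpha> * (pz n1 False a * r0\<^sup>2 + pz n1 True a * r1\<^sup>2) \<le> \<alpha> * (pz n1 False a * c0 + pz n1 True a * c1)"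
    using al by (rule mult_left_mono)
  hence "Vv \<alpha> n1 n2 a b \<le> Vv \<alpha> n1 1 a \<psi>" using XX unfolding Vv_def b0 p0 p1 by linarith
  thus ?thesis using un by blast
qed

theorem lemma1:
  fixes \<alpha> :: real and n1 n2 :: nat
  assumes "0 < \<alpha>" and "\<alpha> \<le> 2" and "1 \<le> n1" and "1 \<le> n2"
  shows "f_val \<alpha> n1 n2 = f_val \<alpha> n1 1"
proof -
  have E: "\<And>k. {Re (op_trace (n1 + k)
       (op_mult (n1 + k) (op_add (op_scale (complex_of_real \<alpha>) (MZ (n1 + k))) (MX (n1 + k)))
          (op_tensor n1 (proj \<phi>a) (proj \<phi>b)))) |
      \<phi>a \<phi>b. unit_vec n1 \<phi>a \<and> unit_vec k \<phi>b} = {Vv \<alpha> n1 k \<phi>a \<phi>b | \<phi>a \<phi>b. unit_vec n1 \<phi>a \<and> unit_vec k \<phi>b}"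
    by (simp only: value_eq)
  let ?S1 = "{Vv \<alpha> n1 1 \<phi>a \<phi>b | \<phi>a \<phi>b. unit_vec n1 \<phi>a \<and> unit_vec 1 \<phi>b}"
  let ?S2 = "{Vv \<alpha> n1 n2 \<phi>a \<phi>b | \<phi>a \<phi>b. unit_vec n1 \<phi>a \<and> unit_vec n2 \<phi>b}"
  have sub: "?S1 \<subseteq> ?S2"
  proof
    fix x assume "x \<in> ?S1"
    then obtain a b where x: "x = Vv \<alpha> n1 1 a b" "unit_vec n1 a" "unit_vec 1 b" by blast
    obtain b' where "unit_vec n2 b'" "Vv \<alpha> n1 n2 a b' = Vv \<alpha> n1 1 a b"
      using embed[OF assms(4) x(3)] by blast
    thus "x \<in> ?S2" using x by force
  qed
  have dom: "\<exists>y\<in>?S1. x \<le> y" if "x \<in> ?S2" for x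
  proof -
    obtain a b where x: "x = Vv \<alpha> n1 n2 a b" "unit_vec n1 a" "unit_vec n2 b" using \<open>x \<in> ?S2\<close> by blast
    obtain \<psi> where "unit_vec 1 \<psi>" "Vv \<alpha> n1 n2 a b \<le> Vv \<alpha> n1 1 a \<psi>"
      using dominate[OF assms(4) x(3) less_imp_le[OF assms(1)], of n1 a] by blast
    thus ?thesis using x by force
  qed
  have ub: "(\<lambda>z. \<forall>x\<in>?S1. x \<le> z) = (\<lambda>z. \<forall>x\<in>?S2. x \<le> z)"
  proof (rule ext, rule iffI)
    fix z assume h: "\<forall>x\<in>?S1. x \<le> z"
    show "\<forall>x\<in>?S2. x \<le> z"
    proof
      fix x assume "x \<in> ?S2"
      then obtain y where "y \<in> ?S1" "x \<le> y" using dom by blast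
      thus "x \<le> z" using h by fastforce
    qed
  next
    fix z assume "\<forall>x\<in>?S2. x \<le> z"
    thus "\<forall>x\<in>?S1. x \<le> z" using sub by blast
  qed
  have "Sup ?S2 = Sup ?S1" unfolding Sup_real_def ub ..
  thus ?thesis unfolding f_val_def E by (simp only: One_nat_def)
qed

end
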